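(* Let $(A,\cdot)$ be a commutative $\mathbb{Q}$-algebra and, for each $m\in\mathbb{N}$, let $w\mapsto f_w(m)$ be a $\mathbb{Q}$-algebra homomorphism $(\mathfrak{H}^1_z,\ast)\to(A,\cdot)$. For a nonempty word $w\in\mathfrak{H}^1_z$ and $M\in\mathbb{N}$ define \[ F_w(M):=\sum_{\substack{1\le k\le l(w)\\ w_1\cdots w_k=w}}\ \sum_{0<m_1<\dots<m_k<M}f_{w_1}(m_1)\cdots f_{w_k}(m_k)\in A, \] where $l(w)$ is the length of $w$ and the inner sum is over all decompositions of $w$ as a concatenation of $k$ nonempty words $w_1,\dots,w_k$; set $F_{\emptyset}(M)=1$ and extend linearly. Then for every $M\in\mathbb{N}$ the map $w\mapsto F_w(M)$ is an algebra homomorphism $(\mathfrak{H}^1_z,\ast)\to(A,\cdot)$; in particular $F_{u\ast v}(M)=F_u(M)F_v(M)$ for all $u,v\in\mathfrak{H}^1_z$.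
   Context: $\mathfrak{H}^1_z=\mathbb{Q}\langle z_1,z_2,\dots\rangle$ is the noncommutative polynomial algebra on letters $z_j$ ($j\in\mathbb{N}$), i.e. the $\mathbb{Q}$-span of words in these letters, equipped with the stuffle product $\ast$ defined bilinearly by $1\ast w=w\ast1=w$ and $z_aw\ast z_bv=z_a(w\ast z_bv)+z_b(z_aw\ast v)+z_{a+b}(w\ast v)$ for $a,b\in\mathbb{N}$ and words $w,v$; this is a commutative $\mathbb{Q}$-algebra. Algebra homomorphisms send the empty word to $1$. *)

theory Defs
  imports Complex_Main
begin

class q_algebra = comm_ring_1 +
  fixes scaleQ :: "rat \<Rightarrow> 'a \<Rightarrow> 'a"
  assumes scaleQ_add_right: "scaleQ r (x + y) = scaleQ r x + scaleQ r y"
    and scaleQ_add_left: "scaleQ (r + s) x = scaleQ r x + scaleQ s x"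
    and scaleQ_scaleQ: "scaleQ r (scaleQ s x) = scaleQ (r * s) x"
    and scaleQ_one: "scaleQ 1 x = x"
    and mult_scaleQ_left: "scaleQ r x * y = scaleQ r (x * y)"

text \<open>A word in the letters z_j (j \<ge> 1) is a list of positive naturals; the letter z_j
  is represented by j.\<close>

definition word_ok :: "nat list \<Rightarrow> bool" where
  "word_ok w \<longleftrightarrow> (\<forall>a\<in>set w. 0 < a)"

definition supp :: "(nat list \<Rightarrow> rat) \<Rightarrow> nat list set" where
  "supp p = {w. p w \<noteq> 0}"

definition Hz :: "(nat list \<Rightarrow> rat) set" where
  "Hz = {p. finite (supp p) \<and> (\<forall>w\<in>supp p. word_ok w)}"

definition pre :: "nat \<Rightarrow> (nat list \<Rightarrow> rat) \<Rightarrow> (nat list \<Rightarrow> rat)" where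
  "pre a p = (\<lambda>w. case w of [] \<Rightarrow> 0 | b # w' \<Rightarrow> if b = a then p w' else 0)"

fun stw :: "nat list \<Rightarrow> nat list \<Rightarrow> (nat list \<Rightarrow> rat)" where
  "stw [] v = (\<lambda>w. if w = v then 1 else 0)"
| "stw (a # u) [] = (\<lambda>w. if w = a # u then 1 else 0)"
| "stw (a # u) (b # v) =
     (\<lambda>w. pre a (stw u (b # v)) w + pre b (stw (a # u) v) w + pre (a + b) (stw u v) w)"

definition st :: "(nat list \<Rightarrow> rat) \<Rightarrow> (nat list \<Rightarrow> rat) \<Rightarrow> (nat list \<Rightarrow> rat)" where
  "st p q = (\<lambda>w. \<Sum>u\<in>supp p. \<Sum>v\<in>supp q. p u * q v * stw u v w)"

definition lin :: "(nat list \<Rightarrow> 'a::q_algebra) \<Rightarrow> (nat list \<Rightarrow> rat) \<Rightarrow> 'a" where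
  "lin f p = (\<Sum>u\<in>supp p. scaleQ (p u) (f u))"

definition is_hom :: "(nat list \<Rightarrow> 'a::q_algebra) \<Rightarrow> bool" where
  "is_hom f \<longleftrightarrow> f [] = 1 \<and> (\<forall>p\<in>Hz. \<forall>q\<in>Hz. lin f (st p q) = lin f p * lin f q)"

definition Fsum :: "(nat \<Rightarrow> nat list \<Rightarrow> 'a::q_algebra) \<Rightarrow> nat \<Rightarrow> nat list \<Rightarrow> 'a" where
  "Fsum f M w =
    (if w = [] then 1 else
     (\<Sum>ws\<in>{ws. concat ws = w \<and> [] \<notin> set ws}.
        \<Sum>ms\<in>{ms. length ms = length ws \<and> sorted_wrt (<) ms \<and> (\<forall>m\<in>set ms. 0 < m \<and> m < M)}.
          \<Prod>i<length ws. f (ms ! i) (ws ! i)))"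

end

theory Submission imports Defs begin

lemma scaleQ_zero_right[simp]: "scaleQ r (0::'a::q_algebra) = 0"
  using scaleQ_add_right[of r "0::'a" 0] by simp
lemma scaleQ_zero_left[simp]: "scaleQ 0 (x::'a::q_algebra) = 0"
  using scaleQ_add_left[of 0 0 x] by simp
lemma scaleQ_sum_left: "scaleQ (sum h I) (x::'a::q_algebra) = (\<Sum>i\<in>I. scaleQ (h i) x)"
  by (induction I rule: infinite_finite_induct) (auto simp: scaleQ_add_left)
lemma scaleQ_sum_right: "scaleQ r (sum h I) = (\<Sum>i\<in>I. scaleQ r (h i :: 'a::q_algebra))"
  by (induction I rule: infinite_finite_induct) (auto simp: scaleQ_add_right)
lemma mult_scaleQ_right: "(x::'a::q_algebra) * scaleQ r y = scaleQ r (x * y)"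
  by (metis mult.commute mult_scaleQ_left)

lemma lin_eq: "finite A \<Longrightarrow> supp p \<subseteq> A \<Longrightarrow> lin g p = (\<Sum>w\<in>A. scaleQ (p w) (g w))"
  unfolding lin_def by (rule sum.mono_neutral_left) (auto simp: supp_def)

lemma supp_sum: "finite I \<Longrightarrow> (\<And>i. i \<in> I \<Longrightarrow> finite (supp (P i))) \<Longrightarrow>
   supp (\<lambda>w. \<Sum>i\<in>I. P i w) \<subseteq> (\<Union>i\<in>I. supp (P i))"
  by (auto simp: supp_def intro: ccontr)

lemma fin_supp_sum: "finite I \<Longrightarrow> (\<And>i. i \<in> I \<Longrightarrow> finite (supp (P i))) \<Longrightarrow>
   finite (supp (\<lambda>w. \<Sum>i\<in>I. P i w))"
  by (rule finite_subset[OF supp_sum]) auto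

lemma lin_sum: assumes "finite I" "\<And>i. i \<in> I \<Longrightarrow> finite (supp (P i))"
  shows "lin g (\<lambda>w. \<Sum>i\<in>I. P i w) = (\<Sum>i\<in>I. lin g (P i))"
proof -
  let ?A = "\<Union>i\<in>I. supp (P i)"
  have fA: "finite ?A" using assms by auto
  have "lin g (\<lambda>w. \<Sum>i\<in>I. P i w) = (\<Sum>w\<in>?A. scaleQ (\<Sum>i\<in>I. P i w) (g w))"
    by (rule lin_eq[OF fA supp_sum[OF assms]])
  also have "\<dots> = (\<Sum>w\<in>?A. \<Sum>i\<in>I. scaleQ (P i w) (g w))" by (simp add: scaleQ_sum_left)
  also have "\<dots> = (\<Sum>i\<in>I. \<Sum>w\<in>?A. scaleQ (P i w) (g w))" by (rule sum.swap)
  also have "\<dots> = (\<Sum>i\<in>I. lin g (P i))"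
    by (rule sum.cong[OF refl], rule lin_eq[symmetric, OF fA]) (use assms in auto)
  finally show ?thesis .
qed

lemma lin_add: assumes "finite (supp p)" "finite (supp q)"
  shows "lin g (\<lambda>w. p w + q w) = lin g p + lin g q"
  using lin_sum[of "{True,False}" "\<lambda>b. if b then p else q" g] assms by simp

lemma lin_scale: assumes "finite (supp p)"
  shows "lin g (\<lambda>w. r * p w) = scaleQ r (lin g p)"
proof -
  have "lin g (\<lambda>w. r * p w) = (\<Sum>w\<in>supp p. scaleQ (r * p w) (g w))"
    by (rule lin_eq[OF assms]) (auto simp: supp_def)
  also have "\<dots> = scaleQ r (lin g p)" by (simp add: lin_def scaleQ_sum_right scaleQ_scaleQ)
  finally show ?thesis .
qed

lemma supp_delta[simp]: "supp (\<lambda>w. if w = v then 1 else 0) = {v}"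
  by (auto simp: supp_def)
lemma lin_delta[simp]: "lin g (\<lambda>w. if w = v then 1 else 0) = g v"
  by (simp add: lin_def scaleQ_one)

lemma supp_pre: "supp (pre a X) = Cons a ` supp X"
  unfolding supp_def pre_def
  by (rule set_eqI, case_tac x) auto

lemma lin_pre: "lin g (pre a X) = lin (\<lambda>w. g (a # w)) X"
  unfolding lin_def supp_pre by (subst sum.reindex) (auto simp: pre_def)

lemma supp_add3: "supp (\<lambda>w. A w + B w + C w) \<subseteq> supp A \<union> supp B \<union> supp C"
  by (auto simp: supp_def)

lemma fin_stw: "finite (supp (stw u v))"
proof (induction u v rule: stw.induct)
  case (3 a u b v)
  show ?case by simp (rule finite_subset[OF supp_add3], use 3 in \<open>auto simp: supp_pre\<close>)
qed auto

fun S :: "(nat list \<Rightarrow> 'a::comm_ring_1) \<Rightarrow> nat list \<Rightarrow> nat list \<Rightarrow> 'a" where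
  "S g [] v = g v"
| "S g (a # u) [] = g (a # u)"
| "S g (a # u) (b # v) = S (\<lambda>w. g (a # w)) u (b # v) + S (\<lambda>w. g (b # w)) (a # u) v
     + S (\<lambda>w. g ((a + b) # w)) u v"

lemma S_Nil2[simp]: "S g u [] = g u" by (cases u) auto

lemma lin_stw: "lin g (stw u v) = S g u v"
proof (induction u v arbitrary: g rule: stw.induct)
  case (3 a u b v)
  have f: "finite (supp (pre c (stw x y)))" for c x y by (simp add: supp_pre fin_stw)
  have f2: "finite (supp (\<lambda>w. pre a (stw u (b # v)) w + pre b (stw (a # u) v) w))"
    by (rule finite_subset[of _ "supp (pre a (stw u (b # v))) \<union> supp (pre b (stw (a # u) v))"])
       (auto simp: supp_def f[unfolded supp_def])
  show ?case using 3 by (simp add: lin_add f f2 lin_pre)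
qed auto


definition conv :: "(nat list \<Rightarrow> 'a::comm_ring_1) \<Rightarrow> (nat list \<Rightarrow> 'a) \<Rightarrow> nat list \<Rightarrow> 'a" where
  "conv g h w = (\<Sum>k\<le>length w. g (take k w) * h (drop k w))"

lemma conv_Nil[simp]: "conv g h [] = g [] * h []" by (simp add: conv_def)

lemma conv_Cons[simp]: "conv g h (a # w) = g [] * h (a # w) + conv (\<lambda>x. g (a # x)) h w"
  unfolding conv_def by (simp only: length_Cons sum.atMost_Suc_shift) simp

lemma S_add[simp]: "S (\<lambda>w. g1 w + g2 w) u v = S g1 u v + S g2 u v"
  by (induction u v arbitrary: g1 g2 rule: stw.induct) (auto simp: algebra_simps)

lemma S_cmult[simp]: "S (\<lambda>w. c * g w) u v = c * S g u v"
  by (induction u v arbitrary: g rule: stw.induct) (auto simp: algebra_simps)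

lemma S_zero[simp]: "S (\<lambda>w. 0) u v = 0"
  by (induction u v rule: stw.induct) auto

lemma S_conv: "S (conv g h) u v =
  (\<Sum>i\<le>length u. \<Sum>j\<le>length v. S g (take i u) (take j v) * S h (drop i u) (drop j v))"
proof (induction u v arbitrary: g rule: stw.induct)
  case (1 v)
  then show ?case by (simp add: conv_def)
next
  case (2 a u)
  then show ?case by (simp add: conv_def)
next
  case (3 a u b v)
  show ?case
    apply (simp add: 3 sum.atMost_Suc_shift del: sum.atMost_Suc)
    apply (simp add: sum.distrib algebra_simps)
    done
qed

lemma word_ok_take: "word_ok u \<Longrightarrow> word_ok (take i u)"
  by (auto simp: word_ok_def dest: in_set_takeD)
lemma word_ok_drop: "word_ok u \<Longrightarrow> word_ok (drop i u)"
  by (auto simp: word_ok_def dest: in_set_dropD)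

definition mult :: "(nat list \<Rightarrow> 'a::comm_ring_1) \<Rightarrow> bool" where
  "mult g \<longleftrightarrow> g [] = 1 \<and> (\<forall>u v. word_ok u \<longrightarrow> word_ok v \<longrightarrow> S g u v = g u * g v)"

lemma mult_conv: assumes "mult g" "mult h" shows "mult (conv g h)"
  unfolding mult_def
proof (intro conjI allI impI)
  show "conv g h [] = 1" using assms by (simp add: mult_def)
  fix u v :: "nat list" assume u: "word_ok u" and v: "word_ok v"
  have "S (conv g h) u v = (\<Sum>i\<le>length u. \<Sum>j\<le>length v.
     (g (take i u) * h (drop i u)) * (g (take j v) * h (drop j v)))"
    unfolding S_conv
    using assms u v by (intro sum.cong refl) (simp add: mult_def word_ok_take word_ok_drop mult_ac)
  also have "\<dots> = conv g h u * conv g h v" by (simp add: conv_def sum_product)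
  finally show "S (conv g h) u v = conv g h u * conv g h v" .
qed

definition delta :: "nat list \<Rightarrow> 'a::comm_ring_1" where "delta w = (if w = [] then 1 else 0)"

lemma S_delta: "S delta u v = (if u = [] \<and> v = [] then 1 else 0)"
proof (induction u v rule: stw.induct)
  case (3 a u b v)
  have e: "(\<lambda>w. delta (c # w)) = (\<lambda>w. 0)" for c by (simp add: delta_def)
  show ?case by (simp only: S.simps e S_zero) simp
qed (auto simp: delta_def)

lemma mult_delta: "mult delta"
  by (simp add: mult_def S_delta) (simp add: delta_def)

lemma Hz_delta: "word_ok u \<Longrightarrow> (\<lambda>w. if w = u then 1 else 0) \<in> Hz"
  by (simp add: Hz_def)

lemma st_delta: "st (\<lambda>w. if w = u then 1 else 0) (\<lambda>w. if w = v then 1 else 0) = stw u v"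
  by (simp add: st_def)

lemma hom_mult: assumes "is_hom g" shows "mult g"
  unfolding mult_def
proof (intro conjI allI impI)
  show "g [] = 1" using assms by (simp add: is_hom_def)
  fix u v :: "nat list" assume u: "word_ok u" and v: "word_ok v"
  have "lin g (st (\<lambda>w. if w = u then 1 else 0) (\<lambda>w. if w = v then 1 else 0))
     = lin g (\<lambda>w. if w = u then 1 else 0) * lin g (\<lambda>w. if w = v then 1 else 0)"
    using assms Hz_delta[OF u] Hz_delta[OF v] unfolding is_hom_def by blast
  then show "S g u v = g u * g v" by (simp add: st_delta lin_stw)
qed

lemma mult_hom: assumes "mult g" shows "is_hom g"
  unfolding is_hom_def
proof (intro conjI ballI)
  show "g [] = 1" using assms by (simp add: mult_def)
  fix p q assume p: "p \<in> Hz" and q: "q \<in> Hz"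
  have fp: "finite (supp p)" and fq: "finite (supp q)" using p q by (auto simp: Hz_def)
  have fs: "finite (supp (\<lambda>w. r * stw u v w))" for r u v
    by (rule finite_subset[OF _ fin_stw[of u v]]) (auto simp: supp_def)
  have "lin g (st p q) = (\<Sum>u\<in>supp p. lin g (\<lambda>w. \<Sum>v\<in>supp q. p u * q v * stw u v w))"
    unfolding st_def by (rule lin_sum[OF fp fin_supp_sum[OF fq fs]])
  also have "\<dots> = (\<Sum>u\<in>supp p. \<Sum>v\<in>supp q. lin g (\<lambda>w. p u * q v * stw u v w))"
    by (intro sum.cong refl lin_sum[OF fq fs])
  also have "\<dots> = (\<Sum>u\<in>supp p. \<Sum>v\<in>supp q. scaleQ (p u) (g u) * scaleQ (q v) (g v))"
  proof (intro sum.cong refl)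
    fix u v assume "u \<in> supp p" "v \<in> supp q"
    then have "word_ok u" "word_ok v" using p q by (auto simp: Hz_def)
    then show "lin g (\<lambda>w. p u * q v * stw u v w) = scaleQ (p u) (g u) * scaleQ (q v) (g v)"
      using assms by (simp only: lin_scale fin_stw lin_stw mult_def mult_scaleQ_left
          mult_scaleQ_right scaleQ_scaleQ mult.commute[of "q v" "p u"])
  qed
  also have "\<dots> = lin g p * lin g q" by (simp add: lin_def sum_product)
  finally show "lin g (st p q) = lin g p * lin g q" .
qed


definition W :: "nat list \<Rightarrow> nat list list set" where
  "W w = {ws. concat ws = w \<and> [] \<notin> set ws}"
definition T :: "nat \<Rightarrow> nat \<Rightarrow> nat list set" where
  "T n M = {ms. length ms = n \<and> sorted_wrt (<) ms \<and> (\<forall>m\<in>set ms. 0 < m \<and> m < M)}"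
definition P :: "(nat \<Rightarrow> nat list \<Rightarrow> 'a::comm_ring_1) \<Rightarrow> nat list list \<Rightarrow> nat list \<Rightarrow> 'a" where
  "P f ws ms = (\<Prod>i<length ws. f (ms ! i) (ws ! i))"
definition B :: "(nat \<Rightarrow> nat list \<Rightarrow> 'a::comm_ring_1) \<Rightarrow> nat \<Rightarrow> nat list list \<Rightarrow> 'a" where
  "B f M ws = (\<Sum>ms\<in>T (length ws) M. P f ws ms)"
definition G :: "(nat \<Rightarrow> nat list \<Rightarrow> 'a::comm_ring_1) \<Rightarrow> nat \<Rightarrow> nat list \<Rightarrow> 'a" where
  "G f M w = (\<Sum>ws\<in>W w. B f M ws)"

lemma W_Nil: "W [] = {[]}"
  by (auto simp: W_def) (metis concat_eq_Nil_conv list.set_intros(1) neq_Nil_conv)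

lemma T_0[simp]: "T 0 M = {[]}" by (auto simp: T_def)

lemma G_Nil[simp]: "G f M [] = 1"
  by (simp add: G_def W_Nil B_def P_def)

lemma Fsum_G: "Fsum f M w = G f M w"
proof (cases "w = []")
  case True then show ?thesis by (simp add: Fsum_def)
next
  case False then show ?thesis by (simp add: Fsum_def G_def B_def P_def W_def T_def)
qed

lemma finite_T: "finite (T n M)"
  by (rule finite_subset[of _ "{ms. set ms \<subseteq> {..<M} \<and> length ms \<le> n}"])
     (auto simp: T_def intro: finite_lists_length_le)

lemma length_le_concat: "[] \<notin> set ws \<Longrightarrow> length ws \<le> length (concat ws)"
proof (induction ws)
  case (Cons x ws) then show ?case by (cases x) auto
qed simp

lemma finite_W: "finite (W w)"
proof (rule finite_subset)
  show "W w \<subseteq> {ws. set ws \<subseteq> {xs. set xs \<subseteq> set w \<and> length xs \<le> length w} \<and> length ws \<le> length w}"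
  proof (rule subsetI)
    fix ws assume "ws \<in> W w"
    then have c: "concat ws = w" and ne: "[] \<notin> set ws" by (auto simp: W_def)
    have 1: "length ws \<le> length w" using length_le_concat[OF ne] c by simp
    have 2: "set xs \<subseteq> set w \<and> length xs \<le> length w" if xs: "xs \<in> set ws" for xs
    proof
      show "set xs \<subseteq> set w" using xs c by auto
      have "length xs \<le> sum_list (map length ws)"
        by (rule member_le_sum_list) (use xs in auto)
      then show "length xs \<le> length w" using c[symmetric] by (simp add: length_concat)
    qed
    show "ws \<in> {ws. set ws \<subseteq> {xs. set xs \<subseteq> set w \<and> length xs \<le> length w} \<and> length ws \<le> length w}"
      using 1 2 by blast
  qed
  show "finite {ws. set ws \<subseteq> {xs. set xs \<subseteq> set w \<and> length xs \<le> length w} \<and> length ws \<le> length w}"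
    by (intro finite_lists_length_le) auto
qed

lemma T_Suc: assumes "0 < M"
  shows "T (Suc n) (Suc M) = T (Suc n) M \<union> (\<lambda>ms. ms @ [M]) ` T n M"
proof safe
  fix ms assume ms: "ms \<in> T (Suc n) (Suc M)" and nin: "ms \<notin> (\<lambda>ms. ms @ [M]) ` T n M"
  show "ms \<in> T (Suc n) M"
  proof (cases "M \<in> set ms")
    case False then show ?thesis using ms by (auto simp: T_def less_Suc_eq)
  next
    case True
    obtain xs y where e: "ms = xs @ [y]" using ms by (cases ms rule: rev_exhaust) (auto simp: T_def)
    have s: "sorted_wrt (<) xs" "\<forall>x\<in>set xs. x < y" "y < Suc M" "\<forall>x\<in>set xs. 0 < x \<and> x < Suc M" "0 < y"
      using ms by (auto simp: T_def e sorted_wrt_append)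
    have "y = M" using True s e by (auto simp: less_Suc_eq)
    then have "xs \<in> T n M" using s ms e by (auto simp: T_def)
    then show ?thesis using nin e \<open>y = M\<close> by auto
  qed
next
  fix ms assume "ms \<in> T (Suc n) M" then show "ms \<in> T (Suc n) (Suc M)" by (auto simp: T_def)
next
  fix ms assume "ms \<in> T n M" then show "ms @ [M] \<in> T (Suc n) (Suc M)"
    using assms by (auto simp: T_def sorted_wrt_append)
qed

lemma B_snoc: assumes "0 < M"
  shows "B f (Suc M) (ws @ [x]) = B f M (ws @ [x]) + B f M ws * f M x"
proof -
  let ?n = "length ws"
  have d: "T (Suc ?n) M \<inter> (\<lambda>ms. ms @ [M]) ` T ?n M = {}" by (auto simp: T_def)
  have "B f (Suc M) (ws @ [x]) = (\<Sum>ms\<in>T (Suc ?n) M \<union> (\<lambda>ms. ms @ [M]) ` T ?n M. P f (ws @ [x]) ms)"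
    by (simp add: B_def T_Suc[OF assms])
  also have "\<dots> = B f M (ws @ [x]) + (\<Sum>ms\<in>(\<lambda>ms. ms @ [M]) ` T ?n M. P f (ws @ [x]) ms)"
    by (subst sum.union_disjoint) (auto simp: finite_T d B_def)
  also have "(\<Sum>ms\<in>(\<lambda>ms. ms @ [M]) ` T ?n M. P f (ws @ [x]) ms) = (\<Sum>ms\<in>T ?n M. P f (ws @ [x]) (ms @ [M]))"
    by (subst sum.reindex) (auto simp: inj_on_def)
  also have "\<dots> = (\<Sum>ms\<in>T ?n M. P f ws ms * f M x)"
  proof (intro sum.cong refl)
    fix ms assume "ms \<in> T ?n M"
    then have l: "length ms = ?n" by (simp add: T_def)
    have "(\<Prod>i<?n. f ((ms @ [M]) ! i) ((ws @ [x]) ! i)) = (\<Prod>i<?n. f (ms ! i) (ws ! i))"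
      by (intro prod.cong refl) (simp add: nth_append l)
    then show "P f (ws @ [x]) (ms @ [M]) = P f ws ms * f M x"
      by (simp add: P_def l nth_append)
  qed
  also have "\<dots> = B f M ws * f M x" by (simp add: B_def sum_distrib_right)
  finally show ?thesis .
qed

lemma W_reindex: assumes "w \<noteq> []"
  shows "(\<Sum>ws\<in>W w. F (butlast ws) (last ws)) = (\<Sum>k<length w. \<Sum>ws'\<in>W (take k w). F ws' (drop k w))"
proof -
  have "(\<Sum>ws\<in>W w. F (butlast ws) (last ws)) =
        (\<Sum>p\<in>Sigma {..<length w} (\<lambda>k. W (take k w)). F (snd p) (drop (fst p) w))"
  proof (rule sum.reindex_bij_witness[where i = "\<lambda>p. snd p @ [drop (fst p) w]"
        and j = "\<lambda>ws. (length (concat (butlast ws)), butlast ws)"])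
    fix ws assume "ws \<in> W w"
    then have c: "concat ws = w" and ne: "[] \<notin> set ws" by (auto simp: W_def)
    have wsne: "ws \<noteq> []" using c assms by auto
    have e: "ws = butlast ws @ [last ws]" using wsne by simp
    have w: "w = concat (butlast ws) @ last ws" using c e by (metis concat_append concat.simps append_Nil2)
    have lne: "last ws \<noteq> []" using ne wsne last_in_set by metis
    have dr: "drop (length (concat (butlast ws))) w = last ws" by (subst w) simp
    show "snd (length (concat (butlast ws)), butlast ws) @ [drop (fst (length (concat (butlast ws)), butlast ws)) w] = ws"
      using dr e by simp
    show "F (snd (length (concat (butlast ws)), butlast ws)) (drop (fst (length (concat (butlast ws)), butlast ws)) w) = F (butlast ws) (last ws)"
      using dr by simp
    have "length (concat (butlast ws)) < length w" using w lne by (metis length_append length_greater_0_conv less_add_same_cancel1)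
    moreover have "butlast ws \<in> W (take (length (concat (butlast ws))) w)"
      using ne by (subst w) (auto simp: W_def dest: in_set_butlastD)
    ultimately show "(length (concat (butlast ws)), butlast ws) \<in> Sigma {..<length w} (\<lambda>k. W (take k w))"
      by simp
  next
    fix p assume "p \<in> Sigma {..<length w} (\<lambda>k. W (take k w))"
    then obtain k ws' where p: "p = (k, ws')" "k < length w" "concat ws' = take k w" "[] \<notin> set ws'"
      by (auto simp: W_def)
    show "(length (concat (butlast (snd p @ [drop (fst p) w]))), butlast (snd p @ [drop (fst p) w])) = p"
      using p by simp
    show "snd p @ [drop (fst p) w] \<in> W w" using p by (auto simp: W_def)
  qed
  also have "\<dots> = (\<Sum>k<length w. \<Sum>ws'\<in>W (take k w). F ws' (drop k w))"
    by (rule sym, subst sum.Sigma) (auto simp: finite_W split_def)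
  finally show ?thesis .
qed

lemma G_Suc: assumes "0 < M" "f M [] = 1"
  shows "G f (Suc M) w = conv (G f M) (f M) w"
proof (cases "w = []")
  case True then show ?thesis using assms by simp
next
  case False
  have "G f (Suc M) w = (\<Sum>ws\<in>W w. B f M ws + B f M (butlast ws) * f M (last ws))"
    unfolding G_def
  proof (intro sum.cong refl)
    fix ws assume "ws \<in> W w"
    then have "ws \<noteq> []" using False by (auto simp: W_def)
    then have e: "ws = butlast ws @ [last ws]" by simp
    show "B f (Suc M) ws = B f M ws + B f M (butlast ws) * f M (last ws)"
      by (subst (1 2) e, rule B_snoc[OF assms(1)])
  qed
  also have "(\<Sum>ws\<in>W w. B f M (butlast ws) * f M (last ws)) = (\<Sum>k<length w. G f M (take k w) * f M (drop k w))"
    using W_reindex[OF False, of "\<lambda>a b. B f M a * f M b"] by (simp add: G_def sum_distrib_right)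
  then have "(\<Sum>ws\<in>W w. B f M ws + B f M (butlast ws) * f M (last ws)) = G f M w + (\<Sum>k<length w. G f M (take k w) * f M (drop k w))"
    by (simp add: sum.distrib G_def)
  also have "\<dots> = conv (G f M) (f M) w"
    unfolding conv_def using assms(2)
    by (simp add: lessThan_Suc_atMost[symmetric] del: lessThan_Suc_atMost)
  finally show ?thesis .
qed

lemma G_small: assumes "M \<le> 1" shows "G f M = delta"
proof
  fix w show "G f M w = delta w"
  proof (cases "w = []")
    case False
    have "B f M ws = 0" if "ws \<in> W w" for ws
    proof -
      have "ws \<noteq> []" using that False by (auto simp: W_def)
      have E: "ms = []" if "\<forall>m\<in>set ms. 0 < m \<and> m < M" for ms :: "nat list"
        using assms that by (cases ms) auto
      have "T (length ws) M = {}"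
      proof (rule equals0I)
        fix ms assume "ms \<in> T (length ws) M"
        then have "length ms = length ws" "\<forall>m\<in>set ms. 0 < m \<and> m < M" by (auto simp: T_def)
        then show False using E[of ms] \<open>ws \<noteq> []\<close> by auto
      qed
      then show ?thesis by (simp add: B_def)
    qed
    then show ?thesis using False by (simp add: G_def delta_def)
  qed (simp add: delta_def)
qed

theorem proposition6p8:
  fixes f :: "nat \<Rightarrow> nat list \<Rightarrow> 'a::q_algebra"
  assumes "\<And>m. 0 < m \<Longrightarrow> is_hom (f m)"
  shows "is_hom (Fsum f M)"
proof -
  have "mult (G f M)"
  proof (induction M)
    case 0 then show ?case by (simp add: G_small mult_delta)
  next
    case (Suc M)
    show ?case
    proof (cases "M = 0")
      case True then show ?thesis by (simp add: G_small mult_delta)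
    next
      case False
      then have h: "mult (f M)" using assms hom_mult by blast
      then have "f M [] = 1" by (simp add: mult_def)
      then have "G f (Suc M) = conv (G f M) (f M)" using False by (intro ext G_Suc) auto
      then show ?thesis using mult_conv[OF Suc h] by simp
    qed
  qed
  moreover have "Fsum f M = G f M" by (rule ext, rule Fsum_G)
  ultimately show ?thesis using mult_hom by metis
qed

end
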